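(* Let $n$ be odd. Then $|RELS(n)|\neq|ROLS(n)|$ if and only if $$\sum_{0\le k,m<n/2}(-1)^{k+m}(n-2k)(n-2m)N_n(k,m)\neq0,$$ where $N_n(k,m)$ is the number of reduced Latin squares of order $n$ of parity type $(k,m)$.
   Context: A Latin square of order $n$ is an $n\times n$ array with entries in $[n]$, each symbol once in each row and column. Rows and columns are viewed as permutations: if symbol $i$ appears in the $j$th place of a row (column) $\sigma$, then $\sigma(i)=j$. $L$ is reduced if its first row and first column are the identity permutation. $\mathrm{par}(L)$ is the product of the signs of all rows and columns; $L$ is even if $\mathrm{par}(L)=1$ and odd if $\mathrm{par}(L)=-1$. $RELS(n)$ and $ROLS(n)$ denote the sets of even and odd reduced Latin squares of order $n$. The parity type of $L$ is $(k,m)$, $0\le k,m\le n/2$, if $k$ of its rows have one sign and the other $n-k$ rows the opposite sign, and $m$ of its columns have one sign and the other $n-m$ columns the opposite sign. *)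

theory Defs
  imports "HOL-Combinatorics.Permutations" "HOL-Library.FuncSet"
begin

text \<open>Latin squares of order n, with rows, columns and symbols indexed by
  {0..<n} (0-based version of [n]).\<close>

definition latin_square :: "nat \<Rightarrow> (nat \<times> nat \<Rightarrow> nat) \<Rightarrow> bool" where
  "latin_square n L \<longleftrightarrow>
     L \<in> ({0..<n} \<times> {0..<n}) \<rightarrow>\<^sub>E {0..<n} \<and>
     (\<forall>r<n. bij_betw (\<lambda>j. L (r, j)) {0..<n} {0..<n}) \<and>
     (\<forall>c<n. bij_betw (\<lambda>i. L (i, c)) {0..<n} {0..<n})"

definition row_perm :: "nat \<Rightarrow> (nat \<times> nat \<Rightarrow> nat) \<Rightarrow> nat \<Rightarrow> nat \<Rightarrow> nat" where
  "row_perm n L r = (\<lambda>s. if s < n then (THE j. j < n \<and> L (r, j) = s) else s)"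

definition col_perm :: "nat \<Rightarrow> (nat \<times> nat \<Rightarrow> nat) \<Rightarrow> nat \<Rightarrow> nat \<Rightarrow> nat" where
  "col_perm n L c = (\<lambda>s. if s < n then (THE i. i < n \<and> L (i, c) = s) else s)"

definition reduced :: "nat \<Rightarrow> (nat \<times> nat \<Rightarrow> nat) \<Rightarrow> bool" where
  "reduced n L \<longleftrightarrow> (\<forall>j<n. L (0, j) = j) \<and> (\<forall>i<n. L (i, 0) = i)"

definition reduced_latin_squares :: "nat \<Rightarrow> (nat \<times> nat \<Rightarrow> nat) set" where
  "reduced_latin_squares n = {L. latin_square n L \<and> reduced n L}"

definition par :: "nat \<Rightarrow> (nat \<times> nat \<Rightarrow> nat) \<Rightarrow> int" where
  "par n L = (\<Prod>r<n. sign (row_perm n L r)) * (\<Prod>c<n. sign (col_perm n L c))"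

definition RELS :: "nat \<Rightarrow> (nat \<times> nat \<Rightarrow> nat) set" where
  "RELS n = {L \<in> reduced_latin_squares n. par n L = 1}"

definition ROLS :: "nat \<Rightarrow> (nat \<times> nat \<Rightarrow> nat) set" where
  "ROLS n = {L \<in> reduced_latin_squares n. par n L = -1}"

definition parity_type :: "nat \<Rightarrow> (nat \<times> nat \<Rightarrow> nat) \<Rightarrow> nat \<Rightarrow> nat \<Rightarrow> bool" where
  "parity_type n L k m \<longleftrightarrow> 2 * k \<le> n \<and> 2 * m \<le> n \<and>
     (card {r. r < n \<and> sign (row_perm n L r) = 1} = k \<or>
      card {r. r < n \<and> sign (row_perm n L r) = 1} = n - k) \<and>
     (card {c. c < n \<and> sign (col_perm n L c) = 1} = m \<or>
      card {c. c < n \<and> sign (col_perm n L c) = 1} = n - m)"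

definition N :: "nat \<Rightarrow> nat \<Rightarrow> nat \<Rightarrow> nat" where
  "N n k m = card {L \<in> reduced_latin_squares n. parity_type n L k m}"

end

theory Submission
  imports Defs
begin

lemma ls_row: "latin_square n L \<Longrightarrow> r < n \<Longrightarrow> bij_betw (\<lambda>j. L (r, j)) {0..<n} {0..<n}"
  by (simp add: latin_square_def)
lemma ls_col: "latin_square n L \<Longrightarrow> c < n \<Longrightarrow> bij_betw (\<lambda>i. L (i, c)) {0..<n} {0..<n}"
  by (simp add: latin_square_def)

lemma row_perm_eq:
  assumes "latin_square n L" "r < n" "j < n" "L (r, j) = s"
  shows "row_perm n L r s = j"
proof -
  have s: "s < n" using bij_betw_apply[OF ls_row[OF assms(1,2)]] assms(3,4) by auto
  have inj: "inj_on (\<lambda>j. L (r, j)) {0..<n}" using ls_row[OF assms(1,2)] bij_betw_def by blast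
  have "(THE j'. j' < n \<and> L (r, j') = s) = j"
    apply (rule the_equality)
    using assms inj by (auto simp: inj_on_def)
  then show ?thesis using s by (simp add: row_perm_def)
qed

lemma row_perm_ex:
  assumes "latin_square n L" "r < n" "s < n"
  shows "row_perm n L r s < n \<and> L (r, row_perm n L r s) = s"
proof -
  have "s \<in> (\<lambda>j. L (r, j)) ` {0..<n}" using ls_row[OF assms(1,2)] assms(3) unfolding bij_betw_def by simp
  then obtain j where "j < n" "L (r, j) = s" by auto
  then show ?thesis using row_perm_eq[OF assms(1,2)] by auto
qed

lemma col_perm_eq:
  assumes "latin_square n L" "c < n" "i < n" "L (i, c) = s"
  shows "col_perm n L c s = i"
proof -
  have s: "s < n" using bij_betw_apply[OF ls_col[OF assms(1,2)]] assms(3,4) by auto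
  have inj: "inj_on (\<lambda>i. L (i, c)) {0..<n}" using ls_col[OF assms(1,2)] bij_betw_def by blast
  have "(THE i'. i' < n \<and> L (i', c) = s) = i"
    apply (rule the_equality)
    using assms inj by (auto simp: inj_on_def)
  then show ?thesis using s by (simp add: col_perm_def)
qed

lemma col_perm_ex:
  assumes "latin_square n L" "c < n" "s < n"
  shows "col_perm n L c s < n \<and> L (col_perm n L c s, c) = s"
proof -
  have "s \<in> (\<lambda>i. L (i, c)) ` {0..<n}" using ls_col[OF assms(1,2)] assms(3) unfolding bij_betw_def by simp
  then obtain i where "i < n" "L (i, c) = s" by auto
  then show ?thesis using col_perm_eq[OF assms(1,2)] by auto
qed

lemma ls_range: "latin_square n L \<Longrightarrow> a < n \<Longrightarrow> b < n \<Longrightarrow> L (a, b) < n"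
  unfolding latin_square_def by (auto simp: PiE_def Pi_def)

lemma row_perm_permutes:
  assumes "latin_square n L" "r < n"
  shows "row_perm n L r permutes {0..<n}"
proof (rule bij_imp_permutes)
  show "bij_betw (row_perm n L r) {0..<n} {0..<n}"
  proof (rule bij_betw_byWitness[where f' = "\<lambda>j. L (r, j)"])
    show "\<forall>a\<in>{0..<n}. L (r, row_perm n L r a) = a" using row_perm_ex[OF assms] by auto
    show "\<forall>a'\<in>{0..<n}. row_perm n L r (L (r, a')) = a'" using row_perm_eq[OF assms] by auto
    show "row_perm n L r ` {0..<n} \<subseteq> {0..<n}" using row_perm_ex[OF assms] by auto
    show "(\<lambda>j. L (r, j)) ` {0..<n} \<subseteq> {0..<n}" using ls_range[OF assms(1)] assms(2) by auto
  qed
  show "\<And>x. x \<notin> {0..<n} \<Longrightarrow> row_perm n L r x = x" by (simp add: row_perm_def)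
qed

lemma col_perm_permutes:
  assumes "latin_square n L" "c < n"
  shows "col_perm n L c permutes {0..<n}"
proof (rule bij_imp_permutes)
  show "bij_betw (col_perm n L c) {0..<n} {0..<n}"
  proof (rule bij_betw_byWitness[where f' = "\<lambda>i. L (i, c)"])
    show "\<forall>a\<in>{0..<n}. L (col_perm n L c a, c) = a" using col_perm_ex[OF assms] by auto
    show "\<forall>a'\<in>{0..<n}. col_perm n L c (L (a', c)) = a'" using col_perm_eq[OF assms] by auto
    show "col_perm n L c ` {0..<n} \<subseteq> {0..<n}" using col_perm_ex[OF assms] by auto
    show "(\<lambda>i. L (i, c)) ` {0..<n} \<subseteq> {0..<n}" using ls_range[OF assms(1)] assms(2) by auto
  qed
  show "\<And>x. x \<notin> {0..<n} \<Longrightarrow> col_perm n L c x = x" by (simp add: col_perm_def)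
qed


definition iso :: "nat \<Rightarrow> (nat \<times> nat \<Rightarrow> nat) \<Rightarrow> (nat \<Rightarrow> nat) \<Rightarrow> (nat \<Rightarrow> nat) \<Rightarrow> (nat \<Rightarrow> nat) \<Rightarrow> (nat \<times> nat \<Rightarrow> nat)" where
  "iso n L \<alpha> \<beta> \<gamma> = (\<lambda>(a, b). if a < n \<and> b < n then \<gamma> (L (\<alpha> a, \<beta> b)) else undefined)"

lemma perm_lt: assumes "p permutes {0..<n::nat}" "x < n" shows "p x < n"
proof -
  have "x \<in> {0..<n}" using assms by simp
  hence "p x \<in> {0..<n}" using permutes_in_image[OF assms(1)] by blast
  thus ?thesis by simp
qed

lemma iso_app: "a < n \<Longrightarrow> b < n \<Longrightarrow> iso n L \<alpha> \<beta> \<gamma> (a, b) = \<gamma> (L (\<alpha> a, \<beta> b))"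
  by (simp add: iso_def)

lemma latin_iso:
  assumes L: "latin_square n L" and p: "\<alpha> permutes {0..<n}" "\<beta> permutes {0..<n}" "\<gamma> permutes {0..<n}"
  shows "latin_square n (iso n L \<alpha> \<beta> \<gamma>)"
  unfolding latin_square_def
proof (intro conjI allI impI)
  show "iso n L \<alpha> \<beta> \<gamma> \<in> {0..<n} \<times> {0..<n} \<rightarrow>\<^sub>E {0..<n}"
    using perm_lt[OF p(1)] perm_lt[OF p(2)] perm_lt[OF p(3)] ls_range[OF L]
    by (auto simp: iso_def PiE_def Pi_def extensional_def)
next
  fix r assume r: "r < n"
  have "bij_betw (\<gamma> \<circ> (\<lambda>j. L (\<alpha> r, j)) \<circ> \<beta>) {0..<n} {0..<n}"
    using permutes_imp_bij[OF p(2)] ls_row[OF L perm_lt[OF p(1) r]] permutes_imp_bij[OF p(3)]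
    by (meson bij_betw_trans)
  then show "bij_betw (\<lambda>j. iso n L \<alpha> \<beta> \<gamma> (r, j)) {0..<n} {0..<n}"
    by (rule bij_betw_cong[THEN iffD1, rotated]) (use r in \<open>auto simp: iso_app\<close>)
next
  fix c assume c: "c < n"
  have "bij_betw (\<gamma> \<circ> (\<lambda>i. L (i, \<beta> c)) \<circ> \<alpha>) {0..<n} {0..<n}"
    using permutes_imp_bij[OF p(1)] ls_col[OF L perm_lt[OF p(2) c]] permutes_imp_bij[OF p(3)]
    by (meson bij_betw_trans)
  then show "bij_betw (\<lambda>i. iso n L \<alpha> \<beta> \<gamma> (i, c)) {0..<n} {0..<n}"
    by (rule bij_betw_cong[THEN iffD1, rotated]) (use c in \<open>auto simp: iso_app\<close>)
qed

lemma row_perm_iso: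
  assumes L: "latin_square n L" and p: "\<alpha> permutes {0..<n}" "\<beta> permutes {0..<n}" "\<gamma> permutes {0..<n}"
    and a: "a < n"
  shows "row_perm n (iso n L \<alpha> \<beta> \<gamma>) a = inv \<beta> \<circ> row_perm n L (\<alpha> a) \<circ> inv \<gamma>"
proof
  fix s
  show "row_perm n (iso n L \<alpha> \<beta> \<gamma>) a s = (inv \<beta> \<circ> row_perm n L (\<alpha> a) \<circ> inv \<gamma>) s"
  proof (cases "s < n")
    case True
    have ig: "inv \<gamma> s < n" using perm_lt[OF permutes_inv[OF p(3)] True] .
    have aa: "\<alpha> a < n" using perm_lt[OF p(1) a] .
    have rp: "row_perm n L (\<alpha> a) (inv \<gamma> s) < n \<and> L (\<alpha> a, row_perm n L (\<alpha> a) (inv \<gamma> s)) = inv \<gamma> s"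
      using row_perm_ex[OF L aa ig] .
    show ?thesis
    proof (rule row_perm_eq[OF latin_iso[OF L p] a])
      let ?x = "row_perm n L (\<alpha> a) (inv \<gamma> s)"
      show "(inv \<beta> \<circ> row_perm n L (\<alpha> a) \<circ> inv \<gamma>) s < n"
        using rp perm_lt[OF permutes_inv[OF p(2)]] by simp
      have "iso n L \<alpha> \<beta> \<gamma> (a, inv \<beta> ?x) = \<gamma> (L (\<alpha> a, \<beta> (inv \<beta> ?x)))"
        using rp perm_lt[OF permutes_inv[OF p(2)]] a by (simp add: iso_app)
      also have "\<dots> = s" using rp by (simp add: permutes_inverses[OF p(2)] permutes_inverses[OF p(3)])
      finally show "iso n L \<alpha> \<beta> \<gamma> (a, (inv \<beta> \<circ> row_perm n L (\<alpha> a) \<circ> inv \<gamma>) s) = s" by simp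
    qed
  next
    case False
    then show ?thesis
      using permutes_not_in[OF permutes_inv[OF p(2)]] permutes_not_in[OF permutes_inv[OF p(3)]]
      by (simp add: row_perm_def)
  qed
qed

lemma col_perm_iso:
  assumes L: "latin_square n L" and p: "\<alpha> permutes {0..<n}" "\<beta> permutes {0..<n}" "\<gamma> permutes {0..<n}"
    and b: "b < n"
  shows "col_perm n (iso n L \<alpha> \<beta> \<gamma>) b = inv \<alpha> \<circ> col_perm n L (\<beta> b) \<circ> inv \<gamma>"
proof
  fix s
  show "col_perm n (iso n L \<alpha> \<beta> \<gamma>) b s = (inv \<alpha> \<circ> col_perm n L (\<beta> b) \<circ> inv \<gamma>) s"
  proof (cases "s < n")
    case True
    have ig: "inv \<gamma> s < n" using perm_lt[OF permutes_inv[OF p(3)] True] .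
    have bb: "\<beta> b < n" using perm_lt[OF p(2) b] .
    have rp: "col_perm n L (\<beta> b) (inv \<gamma> s) < n \<and> L (col_perm n L (\<beta> b) (inv \<gamma> s), \<beta> b) = inv \<gamma> s"
      using col_perm_ex[OF L bb ig] .
    show ?thesis
    proof (rule col_perm_eq[OF latin_iso[OF L p] b])
      let ?x = "col_perm n L (\<beta> b) (inv \<gamma> s)"
      show "(inv \<alpha> \<circ> col_perm n L (\<beta> b) \<circ> inv \<gamma>) s < n"
        using rp perm_lt[OF permutes_inv[OF p(1)]] by simp
      have "iso n L \<alpha> \<beta> \<gamma> (inv \<alpha> ?x, b) = \<gamma> (L (\<alpha> (inv \<alpha> ?x), \<beta> b))"
        using rp perm_lt[OF permutes_inv[OF p(1)]] b by (simp add: iso_app)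
      also have "\<dots> = s" using rp by (simp add: permutes_inverses[OF p(1)] permutes_inverses[OF p(3)])
      finally show "iso n L \<alpha> \<beta> \<gamma> ((inv \<alpha> \<circ> col_perm n L (\<beta> b) \<circ> inv \<gamma>) s, b) = s" by simp
    qed
  next
    case False
    then show ?thesis
      using permutes_not_in[OF permutes_inv[OF p(1)]] permutes_not_in[OF permutes_inv[OF p(3)]]
      by (simp add: col_perm_def)
  qed
qed

lemma permutation_n: "p permutes {0..<n::nat} \<Longrightarrow> permutation p"
  using permutes_imp_permutation[of "{0..<n}" p] by simp

lemma sign3:
  assumes "p permutes {0..<n::nat}" "q permutes {0..<n}" "r permutes {0..<n}"
  shows "sign (inv p \<circ> q \<circ> inv r) = sign p * sign q * sign r"
proof -
  have pp: "permutation (inv p)" "permutation (inv r)" "permutation q"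
    using permutation_n[OF permutes_inv[OF assms(1)]] permutation_n[OF permutes_inv[OF assms(3)]]
      permutation_n[OF assms(2)] by auto
  then show ?thesis
    using sign_compose[OF pp(1) pp(3)] sign_compose[OF permutation_compose[OF pp(1) pp(3)] pp(2)]
      sign_inverse[OF permutation_n[OF assms(1)]] sign_inverse[OF permutation_n[OF assms(3)]]
    by simp
qed

lemma par_iso:
  assumes L: "latin_square n L" and p: "\<alpha> permutes {0..<n}" "\<beta> permutes {0..<n}" "\<gamma> permutes {0..<n}"
  shows "par n (iso n L \<alpha> \<beta> \<gamma>) = (sign \<beta> * sign \<gamma>) ^ n * (sign \<alpha> * sign \<gamma>) ^ n * par n L"
proof -
  have r: "(\<Prod>r<n. sign (row_perm n (iso n L \<alpha> \<beta> \<gamma>) r)) = (\<Prod>r<n. sign \<beta> * sign \<gamma> * sign (row_perm n L (\<alpha> r)))"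
    by (rule prod.cong) (auto simp: row_perm_iso[OF L p] sign3[OF p(2) row_perm_permutes[OF L perm_lt[OF p(1)]] p(3)])
  have r2: "(\<Prod>r<n. sign (row_perm n L (\<alpha> r))) = (\<Prod>r<n. sign (row_perm n L r))"
    using prod.reindex_bij_betw[of \<alpha> "{..<n}" "{..<n}" "\<lambda>r. sign (row_perm n L r)"]
      permutes_imp_bij[OF p(1)] by (simp add: lessThan_atLeast0)
  have c: "(\<Prod>c<n. sign (col_perm n (iso n L \<alpha> \<beta> \<gamma>) c)) = (\<Prod>c<n. sign \<alpha> * sign \<gamma> * sign (col_perm n L (\<beta> c)))"
    by (rule prod.cong) (auto simp: col_perm_iso[OF L p] sign3[OF p(1) col_perm_permutes[OF L perm_lt[OF p(2)]] p(3)])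
  have c2: "(\<Prod>c<n. sign (col_perm n L (\<beta> c))) = (\<Prod>c<n. sign (col_perm n L c))"
    using prod.reindex_bij_betw[of \<beta> "{..<n}" "{..<n}" "\<lambda>r. sign (col_perm n L r)"]
      permutes_imp_bij[OF p(2)] by (simp add: lessThan_atLeast0)
  show ?thesis unfolding par_def r c prod.distrib r2 c2 by (simp add: algebra_simps)
qed


definition gam :: "nat \<Rightarrow> (nat \<times> nat \<Rightarrow> nat) \<Rightarrow> nat \<Rightarrow> nat \<Rightarrow> nat \<Rightarrow> nat" where
  "gam n R i j = transpose 0 (R (i, j))"
definition alp :: "nat \<Rightarrow> (nat \<times> nat \<Rightarrow> nat) \<Rightarrow> nat \<Rightarrow> nat \<Rightarrow> nat \<Rightarrow> nat" where
  "alp n R i j = col_perm n R j \<circ> gam n R i j"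
definition bet :: "nat \<Rightarrow> (nat \<times> nat \<Rightarrow> nat) \<Rightarrow> nat \<Rightarrow> nat \<Rightarrow> nat \<Rightarrow> nat" where
  "bet n R i j = row_perm n R i \<circ> gam n R i j"
definition PhiL :: "nat \<Rightarrow> (nat \<times> nat \<Rightarrow> nat) \<Rightarrow> nat \<Rightarrow> nat \<Rightarrow> (nat \<times> nat \<Rightarrow> nat)" where
  "PhiL n R i j = iso n R (alp n R i j) (bet n R i j) (gam n R i j)"
definition Phi :: "nat \<Rightarrow> (nat \<times> nat \<Rightarrow> nat) \<times> nat \<times> nat \<Rightarrow> (nat \<times> nat \<Rightarrow> nat) \<times> nat \<times> nat" where
  "Phi n t = (case t of (R, i, j) \<Rightarrow> (PhiL n R i j, inv (alp n R i j) 0, inv (bet n R i j) 0))"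

locale sq =
  fixes n R i j
  assumes L: "latin_square n R" and red: "reduced n R" and i: "i < n" and j: "j < n"
begin

lemma n0: "0 < n" using i by simp

lemma gam_perm: "gam n R i j permutes {0..<n}"
  unfolding gam_def by (rule permutes_swap_id) (use ls_range[OF L i j] n0 in auto)
lemma alp_perm: "alp n R i j permutes {0..<n}"
  unfolding alp_def by (rule permutes_compose[OF gam_perm col_perm_permutes[OF L j]])
lemma bet_perm: "bet n R i j permutes {0..<n}"
  unfolding bet_def by (rule permutes_compose[OF gam_perm row_perm_permutes[OF L i]])

lemma gam_inv: "gam n R i j (gam n R i j x) = x"
  by (simp add: gam_def)

lemma alp0: "alp n R i j 0 = i"
  unfolding alp_def gam_def using col_perm_eq[OF L j i refl] by simp
lemma bet0: "bet n R i j 0 = j"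
  unfolding bet_def gam_def using row_perm_eq[OF L i j refl] by simp

lemma gam_lt: "x < n \<Longrightarrow> gam n R i j x < n" using perm_lt[OF gam_perm] .

lemma latin_PhiL: "latin_square n (PhiL n R i j)"
  unfolding PhiL_def by (rule latin_iso[OF L alp_perm bet_perm gam_perm])

lemma reduced_PhiL: "reduced n (PhiL n R i j)"
  unfolding reduced_def
proof (intro conjI allI impI)
  fix b assume b: "b < n"
  have "PhiL n R i j (0, b) = gam n R i j (R (i, row_perm n R i (gam n R i j b)))"
    using b n0 by (simp add: PhiL_def iso_app alp0 bet_def)
  also have "\<dots> = b" using row_perm_ex[OF L i gam_lt[OF b]] gam_inv by simp
  finally show "PhiL n R i j (0, b) = b" .
next
  fix a assume a: "a < n"
  have "PhiL n R i j (a, 0) = gam n R i j (R (col_perm n R j (gam n R i j a), j))"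
    using a n0 by (simp add: PhiL_def iso_app bet0 alp_def)
  also have "\<dots> = a" using col_perm_ex[OF L j gam_lt[OF a]] gam_inv by simp
  finally show "PhiL n R i j (a, 0) = a" .
qed

lemma sign_odd_pow: "odd n \<Longrightarrow> sign p ^ n = sign p"
  by (cases p rule: sign_cases) simp_all

lemma par_PhiL:
  assumes "odd n"
  shows "par n (PhiL n R i j) = sign (row_perm n R i) * sign (col_perm n R j) * par n R"
proof -
  have sa: "sign (alp n R i j) = sign (col_perm n R j) * sign (gam n R i j)"
    unfolding alp_def by (rule sign_compose[OF permutation_n[OF col_perm_permutes[OF L j]] permutation_n[OF gam_perm]])
  have sb: "sign (bet n R i j) = sign (row_perm n R i) * sign (gam n R i j)"
    unfolding bet_def by (rule sign_compose[OF permutation_n[OF row_perm_permutes[OF L i]] permutation_n[OF gam_perm]])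
  have "par n (PhiL n R i j) = (sign (row_perm n R i) * (sign (gam n R i j) * sign (gam n R i j))) ^ n
      * (sign (col_perm n R j) * (sign (gam n R i j) * sign (gam n R i j))) ^ n * par n R"
    unfolding PhiL_def par_iso[OF L alp_perm bet_perm gam_perm] sa sb by (simp add: algebra_simps)
  also have "\<dots> = sign (row_perm n R i) ^ n * sign (col_perm n R j) ^ n * par n R"
    by (simp only: sign_idempotent mult_1_right)
  finally show ?thesis by (simp only: sign_odd_pow[OF assms])
qed

end


context sq begin

lemma phi_invol:
  defines "R' \<equiv> PhiL n R i j" and "i' \<equiv> inv (alp n R i j) 0" and "j' \<equiv> inv (bet n R i j) 0"
  shows "PhiL n R' i' j' = R \<and> inv (alp n R' i' j') 0 = i \<and> inv (bet n R' i' j') 0 = j"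
proof -
  let ?\<alpha> = "alp n R i j" and ?\<beta> = "bet n R i j" and ?\<gamma> = "gam n R i j"
  have i': "i' < n" unfolding i'_def using perm_lt[OF permutes_inv[OF alp_perm] n0] .
  have j': "j' < n" unfolding j'_def using perm_lt[OF permutes_inv[OF bet_perm] n0] .
  have ai': "?\<alpha> i' = 0" unfolding i'_def by (simp add: permutes_inverses[OF alp_perm])
  have bj': "?\<beta> j' = 0" unfolding j'_def by (simp add: permutes_inverses[OF bet_perm])
  interpret S': sq n R' i' j'
    using latin_PhiL reduced_PhiL i' j' unfolding R'_def by unfold_locales auto
  have R00: "R (0, 0) = 0" using red n0 by (simp add: reduced_def)
  have R'ij: "R' (i', j') = R (i, j)"
    using i' j' unfolding R'_def by (simp add: PhiL_def iso_app ai' bj' R00 gam_def)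
  have g': "gam n R' i' j' = ?\<gamma>" unfolding gam_def R'ij ..
  let ?\<alpha>' = "alp n R' i' j'" and ?\<beta>' = "bet n R' i' j'"
  have comp: "PhiL n R' i' j' (a, b) = R (?\<alpha> (?\<alpha>' a), ?\<beta> (?\<beta>' b))" if "a < n" "b < n" for a b
  proof -
    have "PhiL n R' i' j' (a, b) = ?\<gamma> (R' (?\<alpha>' a, ?\<beta>' b))"
      using that by (simp add: PhiL_def iso_app g')
    also have "\<dots> = ?\<gamma> (?\<gamma> (R (?\<alpha> (?\<alpha>' a), ?\<beta> (?\<beta>' b))))"
      using perm_lt[OF S'.alp_perm that(1)] perm_lt[OF S'.bet_perm that(2)]
      unfolding R'_def by (simp add: PhiL_def iso_app)
    also have "\<dots> = R (?\<alpha> (?\<alpha>' a), ?\<beta> (?\<beta>' b))" by (rule gam_inv)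
    finally show ?thesis .
  qed
  have bb: "?\<beta> (?\<beta>' b) = b" if "b < n" for b
  proof -
    have "b = PhiL n R' i' j' (0, b)" using S'.reduced_PhiL that by (simp add: reduced_def)
    also have "\<dots> = R (?\<alpha> (?\<alpha>' 0), ?\<beta> (?\<beta>' b))" using comp[OF n0 that] .
    also have "\<dots> = R (0, ?\<beta> (?\<beta>' b))" by (simp add: S'.alp0 ai')
    also have "\<dots> = ?\<beta> (?\<beta>' b)"
      using red perm_lt[OF bet_perm perm_lt[OF S'.bet_perm that]] by (simp add: reduced_def)
    finally show ?thesis by simp
  qed
  have aa: "?\<alpha> (?\<alpha>' a) = a" if "a < n" for a
  proof -
    have "a = PhiL n R' i' j' (a, 0)" using S'.reduced_PhiL that by (simp add: reduced_def)
    also have "\<dots> = R (?\<alpha> (?\<alpha>' a), ?\<beta> (?\<beta>' 0))" using comp[OF that n0] .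
    also have "\<dots> = R (?\<alpha> (?\<alpha>' a), 0)" by (simp add: S'.bet0 bj')
    also have "\<dots> = ?\<alpha> (?\<alpha>' a)"
      using red perm_lt[OF alp_perm perm_lt[OF S'.alp_perm that]] by (simp add: reduced_def)
    finally show ?thesis by simp
  qed
  have ext: "R (a, b) = undefined" if "\<not> (a < n \<and> b < n)" for a b
    using L that unfolding latin_square_def PiE_def extensional_def by auto
  have e1: "PhiL n R' i' j' = R"
  proof
    fix x show "PhiL n R' i' j' x = R x"
    proof (cases x)
      case (Pair a b)
      show ?thesis
      proof (cases "a < n \<and> b < n")
        case True then show ?thesis using comp aa bb Pair by simp
      next
        case False then show ?thesis using ext[OF False] Pair by (auto simp add: PhiL_def iso_def)
      qed
    qed
  qed
  have "?\<alpha> (?\<alpha>' i) = ?\<alpha> 0" using aa[OF i] alp0 by simp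
  then have "inv ?\<alpha> (?\<alpha> (?\<alpha>' i)) = inv ?\<alpha> (?\<alpha> 0)" by simp
  then have a'i: "?\<alpha>' i = 0" by (simp add: permutes_inverses[OF alp_perm])
  have "?\<beta> (?\<beta>' j) = ?\<beta> 0" using bb[OF j] bet0 by simp
  then have "inv ?\<beta> (?\<beta> (?\<beta>' j)) = inv ?\<beta> (?\<beta> 0)" by simp
  then have b'j: "?\<beta>' j = 0" by (simp add: permutes_inverses[OF bet_perm])
  have e2: "inv ?\<alpha>' 0 = i" using permutes_inv_eq[OF S'.alp_perm] a'i by simp
  have e3: "inv ?\<beta>' 0 = j" using permutes_inv_eq[OF S'.bet_perm] b'j by simp
  show ?thesis using e1 e2 e3 by simp
qed

end


abbreviation "RLS n \<equiv> reduced_latin_squares n"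
definition "TT n = RLS n \<times> {..<n} \<times> {..<n}"

lemma RLS_iff: "R \<in> RLS n \<longleftrightarrow> latin_square n R \<and> reduced n R"
  by (simp add: reduced_latin_squares_def)

lemma finite_RLS: "finite (RLS n)"
proof (rule finite_subset)
  show "RLS n \<subseteq> ({0..<n} \<times> {0..<n}) \<rightarrow>\<^sub>E {0..<n}"
    by (auto simp: reduced_latin_squares_def latin_square_def)
  show "finite (({0..<n} \<times> {0..<n}) \<rightarrow>\<^sub>E {0..<n})" by (intro finite_PiE) auto
qed

lemma finite_TT: "finite (TT n)" unfolding TT_def using finite_RLS by simp

lemma Phi_TT: assumes "t \<in> TT n" shows "Phi n t \<in> TT n \<and> Phi n (Phi n t) = t"
proof -
  obtain R i j where t: "t = (R, i, j)" and R: "R \<in> RLS n" and i: "i < n" and j: "j < n"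
    using assms unfolding TT_def by auto
  interpret sq n R i j using R i j by unfold_locales (auto simp: RLS_iff)
  have i': "inv (alp n R i j) 0 < n" using perm_lt[OF permutes_inv[OF alp_perm] n0] .
  have j': "inv (bet n R i j) 0 < n" using perm_lt[OF permutes_inv[OF bet_perm] n0] .
  have "Phi n t \<in> TT n" using latin_PhiL reduced_PhiL i' j'
    by (simp add: t Phi_def TT_def RLS_iff)
  moreover have "Phi n (Phi n t) = t" using phi_invol by (simp add: t Phi_def)
  ultimately show ?thesis by simp
qed

lemma bij_Phi: "bij_betw (Phi n) (TT n) (TT n)"
  by (rule bij_betw_byWitness[where f' = "Phi n"]) (use Phi_TT in auto)

definition "Sr n R = (\<Sum>r<n. sign (row_perm n R r))"
definition "Sc n R = (\<Sum>c<n. sign (col_perm n R c))"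

lemma key:
  assumes "odd n"
  shows "(\<Sum>R\<in>RLS n. par n R * Sr n R * Sc n R) = int n ^ 2 * (\<Sum>R\<in>RLS n. par n R)"
proof -
  have "(\<Sum>t\<in>TT n. par n (fst (Phi n t))) = (\<Sum>t\<in>TT n. par n (fst t))"
    using sum.reindex_bij_betw[OF bij_Phi, of "\<lambda>t. par n (fst t)" n] by simp
  also have "\<dots> = (\<Sum>R\<in>RLS n. \<Sum>p\<in>{..<n} \<times> {..<n}. par n R)"
    unfolding TT_def by (simp add: sum.cartesian_product')
  also have "\<dots> = int n ^ 2 * (\<Sum>R\<in>RLS n. par n R)"
    by (simp add: sum_distrib_left power2_eq_square algebra_simps)
  finally have 1: "(\<Sum>t\<in>TT n. par n (fst (Phi n t))) = int n ^ 2 * (\<Sum>R\<in>RLS n. par n R)" .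
  have "(\<Sum>t\<in>TT n. par n (fst (Phi n t))) =
      (\<Sum>R\<in>RLS n. \<Sum>p\<in>{..<n} \<times> {..<n}. par n (fst (Phi n (R, p))))"
    unfolding TT_def by (simp add: sum.cartesian_product')
  also have "\<dots> = (\<Sum>R\<in>RLS n. \<Sum>i<n. \<Sum>j<n. sign (row_perm n R i) * sign (col_perm n R j) * par n R)"
  proof (rule sum.cong[OF refl])
    fix R assume R: "R \<in> RLS n"
    have "(\<Sum>p\<in>{..<n} \<times> {..<n}. par n (fst (Phi n (R, p)))) = (\<Sum>i<n. \<Sum>j<n. par n (fst (Phi n (R, i, j))))"
      by (simp add: sum.cartesian_product')
    also have "\<dots> = (\<Sum>i<n. \<Sum>j<n. sign (row_perm n R i) * sign (col_perm n R j) * par n R)"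
    proof (intro sum.cong refl)
      fix i j assume "i \<in> {..<n}" "j \<in> {..<n}"
      then interpret sq n R i j using R by unfold_locales (auto simp: RLS_iff)
      show "par n (fst (Phi n (R, i, j))) = sign (row_perm n R i) * sign (col_perm n R j) * par n R"
        using par_PhiL[OF assms] by (simp add: Phi_def)
    qed
    finally show "(\<Sum>p\<in>{..<n} \<times> {..<n}. par n (fst (Phi n (R, p)))) = (\<Sum>i<n. \<Sum>j<n. sign (row_perm n R i) * sign (col_perm n R j) * par n R)" .
  qed
  also have "\<dots> = (\<Sum>R\<in>RLS n. par n R * Sr n R * Sc n R)"
    unfolding Sr_def Sc_def by (simp add: sum_product sum_distrib_left algebra_simps)
  finally show ?thesis using 1 by simp
qed

lemma prod_sign_pm: "(\<Prod>x\<in>A. sign (f x)) = 1 \<or> (\<Prod>x\<in>A. sign (f x)) = -1"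
proof (induction A rule: infinite_finite_induct)
  case (insert x F)
  then show ?case by (cases "f x" rule: sign_cases) auto
qed auto

lemma par_pm: "par n R = 1 \<or> par n R = -1"
  unfolding par_def using prod_sign_pm[of "row_perm n R" "{..<n}"] prod_sign_pm[of "col_perm n R" "{..<n}"]
  by auto

lemma sum_par: "(\<Sum>R\<in>RLS n. par n R) = int (card (RELS n)) - int (card (ROLS n))"
proof -
  have U: "RLS n = RELS n \<union> ROLS n" using par_pm unfolding RELS_def ROLS_def by auto
  have D: "RELS n \<inter> ROLS n = {}" unfolding RELS_def ROLS_def by auto
  have f: "finite (RELS n)" "finite (ROLS n)" using finite_RLS unfolding RELS_def ROLS_def by auto
  have "(\<Sum>R\<in>RLS n. par n R) = (\<Sum>R\<in>RELS n. par n R) + (\<Sum>R\<in>ROLS n. par n R)"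
    unfolding U by (rule sum.union_disjoint[OF f D])
  also have "\<dots> = (\<Sum>R\<in>RELS n. 1) + (\<Sum>R\<in>ROLS n. -1)"
    by (intro arg_cong2[where f = "(+)"] sum.cong) (auto simp: RELS_def ROLS_def)
  finally show ?thesis by simp
qed


lemma sum_prod_pm:
  fixes g :: "nat \<Rightarrow> int"
  assumes g: "\<And>r. g r = 1 \<or> g r = -1"
  shows "(\<Sum>r<n. g r) = 2 * int (card {r. r < n \<and> g r = 1}) - int n \<and>
         (\<Prod>r<n. g r) = (-1) ^ (n - card {r. r < n \<and> g r = 1}) \<and>
         card {r. r < n \<and> g r = 1} \<le> n"
proof (induction n)
  case 0 then show ?case by simp
next
  case (Suc n)
  let ?C = "\<lambda>n. {r. r < n \<and> g r = 1}"
  have fin: "finite (?C n)" by simp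
  show ?case
  proof (cases "g n = 1")
    case True
    have "?C (Suc n) = insert n (?C n)" using True by auto
    then have c: "card (?C (Suc n)) = Suc (card (?C n))" using fin by simp
    show ?thesis using Suc.IH True unfolding c by simp
  next
    case False
    then have gn: "g n = -1" using g by metis
    have "?C (Suc n) = ?C n" using False by (auto simp: less_Suc_eq)
    then have c: "card (?C (Suc n)) = card (?C n)" by simp
    have e: "Suc n - card (?C n) = Suc (n - card (?C n))" using Suc.IH by linarith
    show ?thesis using Suc.IH gn unfolding c e by simp
  qed
qed

lemma fval:
  assumes "odd n" "e \<le> n"
  shows "(-1::int) ^ (n - e) * (2 * int e - int n) = (-1) ^ (min e (n - e)) * (int n - 2 * int (min e (n - e)))"
proof (cases "e \<le> n - e")
  case True
  have "(-1::int) ^ (n - e) * (-1) ^ e = (-1) ^ n" using assms(2) by (simp add: power_add[symmetric])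
  also have "\<dots> = -1" using assms(1) by simp
  finally have x: "(-1::int) ^ (n - e) * (-1) ^ e = -1" .
  have y: "(-1::int) ^ e * (-1) ^ e = 1" by (simp add: power_add[symmetric] flip: power_add)
  have "(-1::int) ^ (n - e) = - ((-1) ^ e)"
    using x y by (metis minus_equation_iff mult.commute mult_minus_left mult_cancel_left2 mult.assoc mult_1_right)
  then show ?thesis using True by (simp add: algebra_simps)
next
  case False
  then show ?thesis using assms(2) by (simp add: of_nat_diff algebra_simps)
qed

lemma ptype_iff:
  assumes "odd (n::nat)" "e \<le> n" "2 * k < n"
  shows "(e = k \<or> e = n - k) \<longleftrightarrow> k = min e (n - e)"
proof -
  obtain q where q: "n = 2 * q + 1" using assms(1) oddE by blast
  show ?thesis using assms(2,3) unfolding q min_def by (cases "e \<le> 2 * q + 1 - e") (simp_all, linarith+)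
qed

lemma min_lt: assumes "odd (n::nat)" "e \<le> n" shows "2 * min e (n - e) < n"
proof -
  obtain q where q: "n = 2 * q + 1" using assms(1) oddE by blast
  show ?thesis
  proof (cases "e \<le> n - e")
    case True then have "min e (n - e) = e" by simp
    then show ?thesis using True assms(2) q by presburger
  next
    case False then have "min e (n - e) = n - e" by simp
    then show ?thesis using False assms(2) q by presburger
  qed
qed


definition "er n R = card {r. r < n \<and> sign (row_perm n R r) = 1}"
definition "ec n R = card {c. c < n \<and> sign (col_perm n R c) = 1}"
definition "ff n k = (-1::int) ^ k * (int n - 2 * int k)"

lemma sign_pm: "sign p = 1 \<or> sign p = -1" by (cases p rule: sign_cases) auto

lemma row_facts: "(\<Sum>r<n. sign (row_perm n R r)) = 2 * int (er n R) - int n \<and>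
   (\<Prod>r<n. sign (row_perm n R r)) = (-1) ^ (n - er n R) \<and> er n R \<le> n"
  unfolding er_def by (rule sum_prod_pm) (rule sign_pm)
lemma col_facts: "(\<Sum>r<n. sign (col_perm n R r)) = 2 * int (ec n R) - int n \<and>
   (\<Prod>r<n. sign (col_perm n R r)) = (-1) ^ (n - ec n R) \<and> ec n R \<le> n"
  unfolding ec_def by (rule sum_prod_pm) (rule sign_pm)

lemma val_R:
  assumes "odd n"
  shows "par n R * Sr n R * Sc n R = ff n (min (er n R) (n - er n R)) * ff n (min (ec n R) (n - ec n R))"
proof -
  note r = row_facts[of n R, THEN conjunct1] row_facts[of n R, THEN conjunct2, THEN conjunct1]
  note c = col_facts[of n R, THEN conjunct1] col_facts[of n R, THEN conjunct2, THEN conjunct1]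
  have "par n R * Sr n R * Sc n R =
     ((-1) ^ (n - er n R) * (2 * int (er n R) - int n)) * ((-1) ^ (n - ec n R) * (2 * int (ec n R) - int n))"
    unfolding par_def Sr_def Sc_def r c by (simp add: algebra_simps)
  also have "\<dots> = ff n (min (er n R) (n - er n R)) * ff n (min (ec n R) (n - ec n R))"
    unfolding ff_def using fval[OF assms] row_facts[of n R] col_facts[of n R] by simp
  finally show ?thesis .
qed

lemma ptype_R:
  assumes "odd n" "2 * k < n" "2 * m < n"
  shows "parity_type n R k m \<longleftrightarrow> k = min (er n R) (n - er n R) \<and> m = min (ec n R) (n - ec n R)"
  unfolding parity_type_def er_def[symmetric] ec_def[symmetric]
  using assms ptype_iff[OF assms(1) conjunct2[OF conjunct2[OF row_facts]] assms(2)]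
    ptype_iff[OF assms(1) conjunct2[OF conjunct2[OF col_facts]] assms(3)]
  by auto

lemma card_filter_int: "finite A \<Longrightarrow> int (card {x \<in> A. P x}) = (\<Sum>x\<in>A. if P x then 1 else 0)"
  by (simp add: sum.inter_filter[symmetric])

lemma main_sum:
  assumes "odd n"
  shows "(\<Sum>k\<in>{k. 2 * k < n}. \<Sum>m\<in>{m. 2 * m < n}.
        (-1) ^ (k + m) * (int n - 2 * int k) * (int n - 2 * int m) * int (N n k m))
      = (\<Sum>R\<in>RLS n. par n R * Sr n R * Sc n R)"
proof -
  let ?K = "{k. 2 * k < n}"
  have finK: "finite ?K" by (rule finite_subset[of _ "{..<n}"]) auto
  let ?a = "\<lambda>R. min (er n R) (n - er n R)" and ?b = "\<lambda>R. min (ec n R) (n - ec n R)"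
  have "(\<Sum>k\<in>?K. \<Sum>m\<in>?K. (-1) ^ (k + m) * (int n - 2 * int k) * (int n - 2 * int m) * int (N n k m))
      = (\<Sum>k\<in>?K. \<Sum>m\<in>?K. \<Sum>R\<in>RLS n. if k = ?a R then (if m = ?b R then ff n k * ff n m else 0) else 0)"
  proof (intro sum.cong refl)
    fix k m assume k: "k \<in> ?K" and m: "m \<in> ?K"
    have "int (N n k m) = (\<Sum>R\<in>RLS n. if parity_type n R k m then 1 else 0)"
      unfolding N_def by (rule card_filter_int[OF finite_RLS])
    also have "\<dots> = (\<Sum>R\<in>RLS n. if k = ?a R then (if m = ?b R then 1 else 0) else 0)"
      using ptype_R[OF assms] k m by (intro sum.cong refl) auto
    finally have NN: "int (N n k m) = (\<Sum>R\<in>RLS n. if k = ?a R then (if m = ?b R then 1 else 0) else 0)" .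
    have "(-1) ^ (k + m) * (int n - 2 * int k) * (int n - 2 * int m) * int (N n k m) = ff n k * ff n m * int (N n k m)"
      by (simp add: ff_def power_add algebra_simps)
    also have "\<dots> = (\<Sum>R\<in>RLS n. ff n k * ff n m * (if k = ?a R then (if m = ?b R then 1 else 0) else 0))"
      unfolding NN by (rule sum_distrib_left)
    also have "\<dots> = (\<Sum>R\<in>RLS n. if k = ?a R then (if m = ?b R then ff n k * ff n m else 0) else 0)"
      by (intro sum.cong refl) simp
    finally show "(-1) ^ (k + m) * (int n - 2 * int k) * (int n - 2 * int m) * int (N n k m) =
      (\<Sum>R\<in>RLS n. if k = ?a R then (if m = ?b R then ff n k * ff n m else 0) else 0)" .
  qed
  also have "\<dots> = (\<Sum>k\<in>?K. \<Sum>R\<in>RLS n. \<Sum>m\<in>?K. if k = ?a R then (if m = ?b R then ff n k * ff n m else 0) else 0)"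
    by (rule sum.cong[OF refl], rule sum.swap)
  also have "\<dots> = (\<Sum>R\<in>RLS n. \<Sum>k\<in>?K. \<Sum>m\<in>?K. if k = ?a R then (if m = ?b R then ff n k * ff n m else 0) else 0)"
    by (rule sum.swap)
  also have "\<dots> = (\<Sum>R\<in>RLS n. ff n (?a R) * ff n (?b R))"
  proof (intro sum.cong refl)
    fix R
    have a: "?a R \<in> ?K" using min_lt[OF assms conjunct2[OF conjunct2[OF row_facts]]] by simp
    have b: "?b R \<in> ?K" using min_lt[OF assms conjunct2[OF conjunct2[OF col_facts]]] by simp
    show "(\<Sum>k\<in>?K. \<Sum>m\<in>?K. if k = ?a R then (if m = ?b R then ff n k * ff n m else 0) else 0) = ff n (?a R) * ff n (?b R)"
    proof -
      have i: "(\<Sum>m\<in>?K. if k = ?a R then (if m = ?b R then ff n k * ff n m else 0) else 0)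
          = (if k = ?a R then ff n k * ff n (?b R) else 0)" for k
        by (cases "k = ?a R") (simp_all add: finK b[unfolded mem_Collect_eq])
      show ?thesis unfolding i by (simp only: sum.delta[OF finK] a if_True)
    qed
  qed
  also have "\<dots> = (\<Sum>R\<in>RLS n. par n R * Sr n R * Sc n R)"
    using val_R[OF assms] by simp
  finally show ?thesis .
qed

theorem proposition3p3:
  fixes n :: nat
  assumes "odd n"
  shows "card (RELS n) \<noteq> card (ROLS n) \<longleftrightarrow>
    (\<Sum>k\<in>{k. 2 * k < n}. \<Sum>m\<in>{m. 2 * m < n}.
        (-1) ^ (k + m) * (int n - 2 * int k) * (int n - 2 * int m) * int (N n k m)) \<noteq> 0"
proof -
  have n0: "int n ^ 2 \<noteq> 0" using assms by (cases n) auto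
  show ?thesis unfolding main_sum[OF assms] key[OF assms] sum_par using n0 by simp
qed

end
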